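(* Let $\hat\tau$ be a $\widehat{\mathbb{Z}}$-tropical type of genus $g$ inducing essential types. Then $$0\le k_{\hat\tau}\le\max(2g-1,0),\qquad\text{where } k_{\hat\tau}=b_1(\Gamma)+2\sum_{v\in V_+}g_v-|V_+|.$$
   Context: A $\widehat{\mathbb{Z}}$-tropical type $\hat\tau$ consists of a graph $\Gamma$ (vertices $V$, edges $E$, $n$ legs) with genera $g_v\ge0$ satisfying $\sum_vg_v+b_1(\Gamma)=g$, degrees $d_v\in\mathbb{Z}$, a partition $V=V_0\sqcup V_+$ into external and internal vertices, and slopes $m_{\vec e}=-m_{\overleftarrow e}\in\widehat{\mathbb{Z}}$ satisfying balancing $d_v=\sum_{e\ni v}m_{\vec e}+\sum_{\text{legs }i\text{ at }v}c_i$ in $\widehat{\mathbb{Z}}$ (for given coarse contact orders $c_i$). It induces essential types if every edge joins a vertex of $V_0$ to a vertex of $V_+$ and every $v\in V_+$ has $g_v>0$. *)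

theory Defs
  imports Main
begin

text \<open>An element of the profinite completion of the integers is represented as a
compatible family of residues: for every n \<ge> 1 a residue a n in {0..<n}, with
a n mod m = a m whenever m dvd n (the component at 0 is normalised to 0).\<close>

type_synonym zhat = "nat \<Rightarrow> int"

definition Zhat :: "zhat set" where
  "Zhat = {a. a 0 = 0 \<and> (\<forall>n\<ge>1. 0 \<le> a n \<and> a n < int n)
              \<and> (\<forall>m n. 1 \<le> m \<longrightarrow> m dvd n \<longrightarrow> 1 \<le> n \<longrightarrow> a n mod int m = a m)}"

definition zhat_of_int :: "int \<Rightarrow> zhat" where
  "zhat_of_int k = (\<lambda>n. if n = 0 then 0 else k mod int n)"

definition zhat_neg :: "zhat \<Rightarrow> zhat" where
  "zhat_neg a = (\<lambda>n. if n = 0 then 0 else (- a n) mod int n)"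

definition zhat_sum :: "('i \<Rightarrow> zhat) \<Rightarrow> 'i set \<Rightarrow> zhat" where
  "zhat_sum f I = (\<lambda>n. if n = 0 then 0 else (\<Sum>i\<in>I. f i n) mod int n)"

definition zhat_add :: "zhat \<Rightarrow> zhat \<Rightarrow> zhat" where
  "zhat_add a b = (\<lambda>n. if n = 0 then 0 else (a n + b n) mod int n)"

text \<open>A graph: finite vertex set V, finite edge set E, each edge e with a chosen
orientation ends e = (source, target) (loops and multi-edges allowed).\<close>

definition conn_rel :: "'v set \<Rightarrow> 'e set \<Rightarrow> ('e \<Rightarrow> 'v \<times> 'v) \<Rightarrow> ('v \<times> 'v) set" where
  "conn_rel V E ends =
     Id_on V \<union> ((\<lambda>e. ends e) ` E \<union> (\<lambda>e. prod.swap (ends e)) ` E)\<^sup>+"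

definition n_components :: "'v set \<Rightarrow> 'e set \<Rightarrow> ('e \<Rightarrow> 'v \<times> 'v) \<Rightarrow> nat" where
  "n_components V E ends = card (V // conn_rel V E ends)"

definition betti1 :: "'v set \<Rightarrow> 'e set \<Rightarrow> ('e \<Rightarrow> 'v \<times> 'v) \<Rightarrow> int" where
  "betti1 V E ends = int (card E) - int (card V) + int (n_components V E ends)"

text \<open>Data: vertices V, edges E with endpoints ends, legs L attached via legv,
genera gen, degrees d, partition V = V0 \<union> Vp (external/internal), slopes m e of
the oriented edge (source to target; the reversed orientation has slope -m e),
coarse contact orders c of the legs.\<close>

definition zhat_tropical_type ::
  "nat \<Rightarrow> 'v set \<Rightarrow> 'e set \<Rightarrow> ('e \<Rightarrow> 'v \<times> 'v) \<Rightarrow> 'l set \<Rightarrow> ('l \<Rightarrow> 'v)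
   \<Rightarrow> ('v \<Rightarrow> nat) \<Rightarrow> ('v \<Rightarrow> int) \<Rightarrow> 'v set \<Rightarrow> 'v set \<Rightarrow> ('e \<Rightarrow> zhat) \<Rightarrow> ('l \<Rightarrow> zhat) \<Rightarrow> bool"
where
  "zhat_tropical_type g V E ends L legv gen d V0 Vp m c \<longleftrightarrow>
     finite V \<and> finite E \<and> finite L \<and>
     (\<forall>e\<in>E. fst (ends e) \<in> V \<and> snd (ends e) \<in> V) \<and>
     (\<forall>i\<in>L. legv i \<in> V) \<and>
     int (\<Sum>v\<in>V. gen v) + betti1 V E ends = int g \<and>
     V0 \<union> Vp = V \<and> V0 \<inter> Vp = {} \<and>
     (\<forall>e\<in>E. m e \<in> Zhat) \<and> (\<forall>i\<in>L. c i \<in> Zhat) \<and>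
     (\<forall>v\<in>V. zhat_of_int (d v) =
        zhat_add
          (zhat_add (zhat_sum m {e\<in>E. fst (ends e) = v})
                    (zhat_sum (\<lambda>e. zhat_neg (m e)) {e\<in>E. snd (ends e) = v}))
          (zhat_sum c {i\<in>L. legv i = v}))"

definition induces_essential_types ::
  "'e set \<Rightarrow> ('e \<Rightarrow> 'v \<times> 'v) \<Rightarrow> ('v \<Rightarrow> nat) \<Rightarrow> 'v set \<Rightarrow> 'v set \<Rightarrow> bool" where
  "induces_essential_types E ends gen V0 Vp \<longleftrightarrow>
     (\<forall>e\<in>E. (fst (ends e) \<in> V0 \<and> snd (ends e) \<in> Vp) \<or> (fst (ends e) \<in> Vp \<and> snd (ends e) \<in> V0)) \<and>
     (\<forall>v\<in>Vp. gen v > 0)"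

definition k_hat :: "'v set \<Rightarrow> 'e set \<Rightarrow> ('e \<Rightarrow> 'v \<times> 'v) \<Rightarrow> ('v \<Rightarrow> nat) \<Rightarrow> 'v set \<Rightarrow> int" where
  "k_hat V E ends gen Vp = betti1 V E ends + 2 * int (\<Sum>v\<in>Vp. gen v) - int (card Vp)"

end

theory Submission
  imports Defs
begin

definition prel :: "'v set \<Rightarrow> ('v \<times> 'v) set \<Rightarrow> ('v \<times> 'v) set" where
  "prel V F = Id_on V \<union> (F \<union> F\<inverse>)\<^sup>+"

lemma prel_equiv0:
  assumes "F \<subseteq> V \<times> V"
  shows "equiv V (Id_on V \<union> (F \<union> F\<inverse>)\<^sup>+)"
proof -
  have sub: "(F \<union> F\<inverse>)\<^sup>+ \<subseteq> V \<times> V"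
    using assms by (intro trancl_subset_Sigma) auto
  have sy: "sym ((F \<union> F\<inverse>)\<^sup>+)"
    by (intro sym_trancl) (auto simp: sym_def)
  show ?thesis
    unfolding equiv_def
  proof (intro conjI)
    show "Id_on V \<union> (F \<union> F\<inverse>)\<^sup>+ \<subseteq> V \<times> V"
      using sub by auto
    show "refl_on V (Id_on V \<union> (F \<union> F\<inverse>)\<^sup>+)"
      unfolding refl_on_def by blast
    show "sym (Id_on V \<union> (F \<union> F\<inverse>)\<^sup>+)"
      using sy unfolding sym_def by blast
    show "trans (Id_on V \<union> (F \<union> F\<inverse>)\<^sup>+)"
    proof (rule transI)
      fix x y z
      assume 1: "(x, y) \<in> Id_on V \<union> (F \<union> F\<inverse>)\<^sup>+" and 2: "(y, z) \<in> Id_on V \<union> (F \<union> F\<inverse>)\<^sup>+"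
      show "(x, z) \<in> Id_on V \<union> (F \<union> F\<inverse>)\<^sup>+"
        using 1 2 by (auto intro: trancl_trans)
    qed
  qed
qed
lemma prel_equiv:
  assumes "F \<subseteq> V \<times> V"
  shows "equiv V (prel V F)"
  unfolding prel_def using prel_equiv0[OF assms] .

lemma prel_mono: "prel V F \<subseteq> prel V (insert p F)"
proof
  fix z assume "z \<in> prel V F"
  moreover have "F \<union> F\<inverse> \<subseteq> insert p F \<union> (insert p F)\<inverse>" by auto
  ultimately show "z \<in> prel V (insert p F)"
    unfolding prel_def using trancl_mono[of z "F \<union> F\<inverse>"] by blast
qed

lemma key:
  assumes F: "F \<subseteq> V \<times> V" and a: "a \<in> V" and b: "b \<in> V" and x: "x \<in> V"
    and na: "x \<notin> prel V F `` {a}" and nb: "x \<notin> prel V F `` {b}"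
    and xy: "(x, y) \<in> prel V (insert (a, b) F)"
  shows "(x, y) \<in> prel V F"
proof -
  have eq: "equiv V (prel V F)" using prel_equiv[OF F] .
  have syr: "\<And>u w. (u, w) \<in> prel V F \<Longrightarrow> (w, u) \<in> prel V F"
    using eq unfolding equiv_def sym_def by blast
  have aa: "(a, a) \<in> prel V F" "(b, b) \<in> prel V F"
    using a b unfolding prel_def by (simp_all add: Id_on_iff)
  have xa: "x \<noteq> a" "x \<noteq> b"
  proof -
    show "x \<noteq> a" proof assume "x = a" then show False using na aa(1) by blast qed
    show "x \<noteq> b" proof assume "x = b" then show False using nb aa(2) by blast qed
  qed
  have incl: "\<And>u w. (u, w) \<in> (F \<union> F\<inverse>)\<^sup>+ \<Longrightarrow> (u, w) \<in> prel V F"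
    unfolding prel_def by (rule UnI2)
  have stepr: "\<And>u w z. (u, w) \<in> prel V F \<Longrightarrow> (w, z) \<in> F \<union> F\<inverse> \<Longrightarrow> (u, z) \<in> prel V F"
  proof -
    fix u w z assume uw: "(u, w) \<in> prel V F" and wz: "(w, z) \<in> F \<union> F\<inverse>"
    show "(u, z) \<in> prel V F"
    proof (cases "(u, w) \<in> Id_on V")
      case True
      then have "u = w" by (simp add: Id_on_iff)
      then show ?thesis using incl[OF r_into_trancl[OF wz]] by simp
    next
      case False
      then have "(u, w) \<in> (F \<union> F\<inverse>)\<^sup>+" using uw unfolding prel_def by blast
      then show ?thesis using incl[OF trancl_into_trancl[OF _ wz]] by blast
    qed
  qed
  show ?thesis
  proof (cases "(x, y) \<in> Id_on V")
    case True then show ?thesis unfolding prel_def by (rule UnI1)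
  next
    case False
    then have "(x, y) \<in> (insert (a, b) F \<union> (insert (a, b) F)\<inverse>)\<^sup>+"
      using xy unfolding prel_def by blast
    then show ?thesis
    proof (induction rule: trancl_induct)
      case (base y)
      then have "(x, y) \<in> F \<union> F\<inverse>" using xa by blast
      then show ?case using incl[OF r_into_trancl] by blast
    next
      case (step y z)
      show ?case
      proof (cases "y = a \<or> y = b")
        case True
        then have "(a, x) \<in> prel V F \<or> (b, x) \<in> prel V F" using step(3) syr by blast
        then show ?thesis using na nb by blast
      next
        case False
        then have yz: "(y, z) \<in> F \<union> F\<inverse>" using step(2) by blast
        show ?thesis using stepr[OF step(3) yz] .
      qed
    qed
  qed
qed

lemma step_card:
  assumes F: "F \<subseteq> V \<times> V" and a: "a \<in> V" and b: "b \<in> V" and fin: "finite V"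
  shows "card (V // prel V F) \<le> card (V // prel V (insert (a, b) F)) + 1"
proof -
  let ?r = "prel V F" and ?r' = "prel V (insert (a, b) F)"
  have F': "insert (a, b) F \<subseteq> V \<times> V" using F a b by auto
  have eq: "equiv V ?r" using prel_equiv[OF F] .
  have eq': "equiv V ?r'" using prel_equiv[OF F'] .
  have finq: "finite (V // ?r)" "finite (V // ?r')"
    using fin by (auto simp: quotient_def)
  let ?A = "?r `` {a}" and ?B = "?r `` {b}"
  have sub: "(V // ?r - {?A, ?B}) \<union> {?r' `` {a}} \<subseteq> V // ?r'"
  proof
    fix X assume "X \<in> (V // ?r - {?A, ?B}) \<union> {?r' `` {a}}"
    then show "X \<in> V // ?r'"
    proof
      assume "X \<in> {?r' `` {a}}" then show ?thesis using a by (auto intro: quotientI)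
    next
      assume X: "X \<in> V // ?r - {?A, ?B}"
      then have "X \<in> V // ?r" by blast
      then obtain x where x: "x \<in> V" "X = ?r `` {x}" by (rule quotientE)
      have na: "x \<notin> ?A"
      proof
        assume "x \<in> ?A"
        then have "(a, x) \<in> ?r" by auto
        then have "?A = ?r `` {x}" by (rule equiv_class_eq[OF eq])
        then show False using X x by auto
      qed
      have nb: "x \<notin> ?B"
      proof
        assume "x \<in> ?B"
        then have "(b, x) \<in> ?r" by auto
        then have "?B = ?r `` {x}" by (rule equiv_class_eq[OF eq])
        then show False using X x by auto
      qed
      have "?r' `` {x} = ?r `` {x}"
        using key[OF F a b x(1) na nb] prel_mono[of V F "(a,b)"] by blast
      then show ?thesis using x by (metis quotientI)
    qed
  qed
  have notin: "?r' `` {a} \<notin> V // ?r - {?A, ?B}"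
  proof
    assume H: "?r' `` {a} \<in> V // ?r - {?A, ?B}"
    then have "?r' `` {a} \<in> V // ?r" by blast
    then obtain x where x: "x \<in> V" "?r' `` {a} = ?r `` {x}" by (rule quotientE)
    have "a \<in> ?r' `` {a}" using eq' a by (rule equiv_class_self)
    then have "(x, a) \<in> ?r" using x by auto
    then have "?r `` {x} = ?A" using eq by (metis equiv_class_eq)
    then show False using H x by auto
  qed
  have "card (V // ?r - {?A, ?B}) + 1 = card ((V // ?r - {?A, ?B}) \<union> {?r' `` {a}})"
    using notin finq by simp
  also have "\<dots> \<le> card (V // ?r')" using card_mono[OF finq(2) sub] .
  finally have c1: "card (V // ?r - {?A, ?B}) + 1 \<le> card (V // ?r')" .
  have "card (V // ?r) \<le> card ((V // ?r - {?A, ?B}) \<union> {?A, ?B})"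
    using finq by (intro card_mono) auto
  also have "\<dots> \<le> card (V // ?r - {?A, ?B}) + card {?A, ?B}" by (rule card_Un_le)
  also have "card {?A, ?B} \<le> 2" by (simp add: card_insert_le_m1)
  finally show ?thesis using c1 by linarith
qed

lemma main_card:
  assumes fin: "finite V"
  shows "finite F \<Longrightarrow> F \<subseteq> V \<times> V \<Longrightarrow> card V \<le> card F + card (V // prel V F)"
proof (induction F rule: finite_induct)
  case empty
  have "V // prel V {} = (\<lambda>x. {x}) ` V"
    unfolding prel_def quotient_def by auto
  then have "card (V // prel V {}) = card V"
    by (simp add: card_image)
  then show ?case by simp
next
  case (insert p F)
  obtain a b where p: "p = (a, b)" by (cases p)
  have ab: "a \<in> V" "b \<in> V" using insert.prems p by auto
  have "card V \<le> card F + card (V // prel V F)" using insert by auto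
  moreover have "card (V // prel V F) \<le> card (V // prel V (insert (a, b) F)) + 1"
    using step_card[of F V a b] insert.prems ab fin p by auto
  ultimately show ?case using insert.hyps p by simp
qed

lemma swap_img: fixes ends :: "'e \<Rightarrow> 'a \<times> 'a"
  shows "(\<lambda>e. prod.swap (ends e)) ` E = (ends ` E)\<inverse>"
proof (rule set_eqI)
  fix p :: "'a \<times> 'a"
  obtain u w where p: "p = (u, w)" by (cases p)
  show "p \<in> (\<lambda>e. prod.swap (ends e)) ` E \<longleftrightarrow> p \<in> (ends ` E)\<inverse>"
    unfolding p converse_iff image_iff by (metis prod.swap_def swap_simp swap_swap)
qed
lemma sub_img: "\<forall>e\<in>E. fst (ends e) \<in> V \<and> snd (ends e) \<in> V \<Longrightarrow> ends ` E \<subseteq> V \<times> V"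
  by (auto simp: mem_Times_iff) (metis fst_conv snd_conv)+
lemma betti_nonneg:
  assumes "finite V" "finite E" "\<forall>e\<in>E. fst (ends e) \<in> V \<and> snd (ends e) \<in> V"
  shows "0 \<le> betti1 V E ends"
proof -
  have c: "conn_rel V E ends = prel V (ends ` E)"
    unfolding conn_rel_def prel_def swap_img ..
  have "card V \<le> card (ends ` E) + card (V // prel V (ends ` E))"
    using main_card[OF assms(1)] assms(2) sub_img[OF assms(3)] by blast
  moreover have "card (ends ` E) \<le> card E" using assms(2) by (rule card_image_le)
  ultimately show ?thesis unfolding betti1_def n_components_def c by linarith
qed

theorem lemma3p5p5:
  fixes g :: nat and V :: "'v set" and E :: "'e set" and ends :: "'e \<Rightarrow> 'v \<times> 'v"
    and L :: "'l set" and legv :: "'l \<Rightarrow> 'v" and gen :: "'v \<Rightarrow> nat" and d :: "'v \<Rightarrow> int"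
    and V0 Vp :: "'v set" and m :: "'e \<Rightarrow> zhat" and c :: "'l \<Rightarrow> zhat"
  assumes "zhat_tropical_type g V E ends L legv gen d V0 Vp m c"
    and "induces_essential_types E ends gen V0 Vp"
  shows "0 \<le> k_hat V E ends gen Vp \<and> k_hat V E ends gen Vp \<le> max (2 * int g - 1) 0"
proof -
  note T = assms(1)[unfolded zhat_tropical_type_def]
  have finV: "finite V" and finE: "finite E" using T by auto
  have b: "0 \<le> betti1 V E ends" using betti_nonneg[of V E ends] T by auto
  have VpV: "Vp \<subseteq> V" using T by auto
  have finVp: "finite Vp" using finV VpV finite_subset by blast
  have gpos: "\<forall>v\<in>Vp. gen v > 0" using assms(2) unfolding induces_essential_types_def by auto
  have ST: "(\<Sum>v\<in>Vp. gen v) \<le> (\<Sum>v\<in>V. gen v)"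
    using sum_mono2[OF finV VpV] by auto
  have cS: "card Vp \<le> (\<Sum>v\<in>Vp. gen v)"
  proof -
    have "card Vp = (\<Sum>v\<in>Vp. (1::nat))" by simp
    also have "\<dots> \<le> (\<Sum>v\<in>Vp. gen v)" using gpos by (intro sum_mono) auto
    finally show ?thesis .
  qed
  have e0: "card Vp = 0 \<longrightarrow> (\<Sum>v\<in>Vp. gen v) = 0" using finVp by auto
  have g: "int (\<Sum>v\<in>V. gen v) + betti1 V E ends = int g" using T by auto
  define B where "B = betti1 V E ends"
  define S where "S = int (\<Sum>v\<in>Vp. gen v)"
  define Tt where "Tt = int (\<Sum>v\<in>V. gen v)"
  define C where "C = int (card Vp)"
  have h1: "0 \<le> B" "S \<le> Tt" "C \<le> S" "C = 0 \<longrightarrow> S = 0" "Tt + B = int g" "0 \<le> C"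
    using b unfolding B_def apply simp
    using ST unfolding S_def Tt_def apply (rule of_nat_mono)
    using cS unfolding S_def C_def apply (rule of_nat_mono)
    using e0 unfolding S_def C_def apply simp
    using g unfolding Tt_def B_def apply simp
    unfolding C_def apply simp
    done
  have "0 \<le> B + 2 * S - C \<and> B + 2 * S - C \<le> max (2 * int g - 1) 0"
  proof (cases "C = 0")
    case True
    then show ?thesis using h1 by auto
  next
    case False
    then show ?thesis using h1 by auto
  qed
  then show ?thesis unfolding k_hat_def B_def S_def C_def .
qed

end
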